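(* Let $S_n$ ($n\ge3$) act on $V=\mathbb{C}^n$ by permutations, fix $a,b,c\in\mathbb{C}$, let $*\in\{L,C\}$, and let $x,y$ be $3$-cycles with $xy=g$. Let $\phi^*_{x,y}$ be the corresponding summand of the $g$-component of $\phi(\kappa^*_{\mathrm{tri}},\kappa^L_{\mathrm{tri}})$. For $1\leq i,j,k\leq n$: (1) if $e_i,e_j\in V^y$, then $\phi^*_{x,y}(e_i,e_j,e_k)=0$; (2) if $e_i\in V^y\cap V^x$, then $\phi^*_{x,y}(e_i,e_j,e_k)=0$; (3) if $e_i\in V^y\setminus V^x$ and $e_j\notin V^y$, then $\phi^*_{x,y}(e_i,e_j,ye_j)=2(b-a)\big[\delta_y(xe_i)-\delta_y(x^{-1}e_i)\big]\kappa^*_x(e_i,xe_i)$; (4) if $e_i\notin V^y$, then $\phi^*_{x,y}(e_i,ye_i,y^2e_i)=0$.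
   Context: $S_n$ acts by $\sigma e_i=e_{\sigma(i)}$; $V^g$ is the fixed space of $g$; $\delta_y(v)=1$ if $v\in V^y$ and $0$ otherwise. $\kappa^L_{\mathrm{tri}}=\sum\kappa^L_{(ijk)}(ijk)$ is the linear 2-cochain supported on 3-cycles with $\kappa^L_{(ijk)}(e_i,e_j)=\kappa^L_{(ijk)}(e_j,e_k)=\kappa^L_{(ijk)}(e_k,e_i)=a(e_i+e_j+e_k)+b\sum_{l\notin\{i,j,k\}}e_l$ and $\kappa^L_{(ijk)}(e_l,e_m)=0$ whenever $e_l$ or $e_m$ lies in $V^{(ijk)}$; $\kappa^C_{\mathrm{tri}}$ is the constant 2-cochain supported on 3-cycles with $\kappa^C_{(ijk)}(e_i,e_j)=\kappa^C_{(ijk)}(e_j,e_k)=\kappa^C_{(ijk)}(e_k,e_i)=c$ and $\kappa^C_{(ijk)}(e_l,e_m)=0$ whenever $e_l$ or $e_m$ lies in $V^{(ijk)}$. For $\alpha$ linear or constant and $\beta$ linear, $\phi(\alpha,\beta)_g=\sum_{xy=g}\phi_{x,y}$ with $\phi_{x,y}(v_1,v_2,v_3)=\alpha_x(v_1+yv_1,\beta_y(v_2,v_3))+\alpha_x(v_2+yv_2,\beta_y(v_3,v_1))+\alpha_x(v_3+yv_3,\beta_y(v_1,v_2))$; here $\phi^*_{x,y}$ is this with $\alpha=\kappa^*_{\mathrm{tri}}$, $\beta=\kappa^L_{\mathrm{tri}}$. *)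

theory Defs
  imports "HOL-Analysis.Analysis"
begin

text \<open>V = complex^'n with standard basis e_i; S_n = permutations of the finite index type 'n.\<close>

type_synonym 'n vec = "complex ^ 'n"

definition e :: "'n::finite \<Rightarrow> 'n vec" where
  "e i = axis i 1"

text \<open>Permutation action: sigma e_i = e_(sigma i).\<close>
definition act :: "('n::finite \<Rightarrow> 'n) \<Rightarrow> 'n vec \<Rightarrow> 'n vec" where
  "act \<sigma> v = (\<chi> l. v $ (inv \<sigma> l))"

definition fixsp :: "('n::finite \<Rightarrow> 'n) \<Rightarrow> 'n vec set" where
  "fixsp g = {v. act g v = v}"

definition delta :: "('n::finite \<Rightarrow> 'n) \<Rightarrow> 'n vec \<Rightarrow> complex" where
  "delta y v = (if v \<in> fixsp y then 1 else 0)"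

definition three_cycle :: "('n \<Rightarrow> 'n) \<Rightarrow> bool" where
  "three_cycle \<sigma> \<longleftrightarrow> (\<exists>i j k. distinct [i, j, k] \<and> \<sigma> i = j \<and> \<sigma> j = k \<and> \<sigma> k = i \<and>
       (\<forall>l. l \<notin> {i, j, k} \<longrightarrow> \<sigma> l = l))"

definition kappaL_basis :: "complex \<Rightarrow> complex \<Rightarrow> ('n::finite \<Rightarrow> 'n) \<Rightarrow> 'n \<Rightarrow> 'n \<Rightarrow> 'n vec" where
  "kappaL_basis a b x p q =
     (let A = (\<chi> l. if x l \<noteq> l then a else b) in
      if x p \<noteq> p \<and> x p = q then A
      else if x q \<noteq> q \<and> x q = p then - A
      else 0)"

definition kappaC_basis :: "complex \<Rightarrow> ('n::finite \<Rightarrow> 'n) \<Rightarrow> 'n \<Rightarrow> 'n \<Rightarrow> complex" where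
  "kappaC_basis c x p q =
     (if x p \<noteq> p \<and> x p = q then c
      else if x q \<noteq> q \<and> x q = p then - c
      else 0)"

definition kappaL :: "complex \<Rightarrow> complex \<Rightarrow> ('n::finite \<Rightarrow> 'n) \<Rightarrow> 'n vec \<Rightarrow> 'n vec \<Rightarrow> 'n vec" where
  "kappaL a b x u w =
     (if three_cycle x then (\<Sum>p\<in>UNIV. \<Sum>q\<in>UNIV. (u $ p * w $ q) *s kappaL_basis a b x p q) else 0)"

definition kappaC :: "complex \<Rightarrow> ('n::finite \<Rightarrow> 'n) \<Rightarrow> 'n vec \<Rightarrow> 'n vec \<Rightarrow> complex" where
  "kappaC c x u w =
     (if three_cycle x then (\<Sum>p\<in>UNIV. \<Sum>q\<in>UNIV. u $ p * w $ q * kappaC_basis c x p q) else 0)"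

definition phi_xy :: "(('n::finite \<Rightarrow> 'n) \<Rightarrow> 'n vec \<Rightarrow> 'n vec \<Rightarrow> 'b::plus)
     \<Rightarrow> (('n \<Rightarrow> 'n) \<Rightarrow> 'n vec \<Rightarrow> 'n vec \<Rightarrow> 'n vec)
     \<Rightarrow> ('n \<Rightarrow> 'n) \<Rightarrow> ('n \<Rightarrow> 'n) \<Rightarrow> 'n vec \<Rightarrow> 'n vec \<Rightarrow> 'n vec \<Rightarrow> 'b" where
  "phi_xy \<alpha> \<beta> x y v1 v2 v3 =
      \<alpha> x (v1 + act y v1) (\<beta> y v2 v3)
    + \<alpha> x (v2 + act y v2) (\<beta> y v3 v1)
    + \<alpha> x (v3 + act y v3) (\<beta> y v1 v2)"

end

theory Submission imports Defs begin

lemma tc_obt: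
  assumes "three_cycle x"
  obtains i j k where "distinct [i, j, k]" "x i = j" "x j = k" "x k = i" "\<And>l. l \<notin> {i, j, k} \<Longrightarrow> x l = l"
  using assms unfolding three_cycle_def by blast

lemma tc_cube: assumes "three_cycle x" shows "x (x (x l)) = l"
proof -
  obtain i j k where h: "distinct [i, j, k]" "x i = j" "x j = k" "x k = i" "\<And>l. l \<notin> {i, j, k} \<Longrightarrow> x l = l"
    using tc_obt[OF assms] by blast
  have "l = i \<or> l = j \<or> l = k \<or> x l = l" using h(5)[of l] by blast
  then show ?thesis using h(2-4) by (elim disjE) simp_all
qed

lemma tc_bij: assumes "three_cycle x" shows "bij x"
  by (rule o_bij[of "x \<circ> x"]) (simp_all add: fun_eq_iff tc_cube[OF assms])

lemma tc_moved: assumes "three_cycle x" "x p \<noteq> p" shows "{q. x q \<noteq> q} = {p, x p, x (x p)}" "x (x p) \<noteq> p" "x (x p) \<noteq> x p"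
proof -
  obtain i j k where h: "distinct [i, j, k]" "x i = j" "x j = k" "x k = i" "\<And>l. l \<notin> {i, j, k} \<Longrightarrow> x l = l"
    using tc_obt[OF assms(1)] by blast
  have M: "{q. x q \<noteq> q} = {i, j, k}"
  proof (rule set_eqI)
    fix q
    have "q \<notin> {i, j, k} \<Longrightarrow> x q = q" by (rule h(5))
    then show "q \<in> {q. x q \<noteq> q} \<longleftrightarrow> q \<in> {i, j, k}" using h(1-4) by auto
  qed
  have "p = i \<or> p = j \<or> p = k" using h(5)[of p] assms(2) by blast
  then show "{q. x q \<noteq> q} = {p, x p, x (x p)}" "x (x p) \<noteq> p" "x (x p) \<noteq> x p"
    unfolding M using h(1-4) by (elim disjE; auto)+
qed

lemma tc_two: assumes "three_cycle x" "x p \<noteq> p" shows "x (x p) \<noteq> p"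
  using tc_moved[OF assms] by simp

lemma act_e: assumes "bij \<sigma>" shows "act \<sigma> (e i) = e (\<sigma> i)"
proof -
  have "\<And>l. inv \<sigma> l = i \<longleftrightarrow> l = \<sigma> i" by (metis bij_inv_eq_iff assms)
  then show ?thesis unfolding act_def e_def by (simp add: vec_eq_iff axis_def)
qed

lemma e_eq: "e i = e j \<longleftrightarrow> i = j"
  by (auto simp: e_def axis_eq_axis)

lemma fix_e: assumes "bij \<sigma>" shows "e i \<in> fixsp \<sigma> \<longleftrightarrow> \<sigma> i = i"
  by (simp add: fixsp_def act_e[OF assms] e_eq)

lemma delta_e: assumes "bij \<sigma>" shows "delta \<sigma> (e i) = (if \<sigma> i = i then 1 else 0)"
  by (simp add: delta_def fix_e[OF assms])

lemma kb_row: assumes "three_cycle x"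
  shows "kappaC_basis 1 x p q = (if x p = p then 0 else (if q = x p then 1 else 0) - (if q = inv x p then 1 else 0))"
proof -
  have b: "bij x" by (rule tc_bij[OF assms])
  have iq: "x q = p \<longleftrightarrow> q = inv x p" using bij_inv_eq_iff[OF b] by metis
  show ?thesis
  proof (cases "x p = p")
    case True then show ?thesis using b unfolding kappaC_basis_def by (auto dest: bij_is_inj injD)
  next
    case False
    have "x (x p) \<noteq> p" by (rule tc_two[OF assms False])
    then have "x p \<noteq> inv x p" using iq by (metis bij_inv_eq_iff b)
    show ?thesis
    proof (cases "q = x p")
      case True then show ?thesis using False \<open>x p \<noteq> inv x p\<close> unfolding kappaC_basis_def by simp
    next
      case q1: False
      show ?thesis
      proof (cases "q = inv x p")
        case True
        then have "x q = p" using iq by simp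
        moreover have "q \<noteq> p" using True False \<open>x p \<noteq> inv x p\<close> by (metis \<open>x q = p\<close>)
        ultimately show ?thesis using q1 True False unfolding kappaC_basis_def by simp
      next
        case q2: False
        then have "x q \<noteq> p" using iq by simp
        then show ?thesis using q1 q2 False unfolding kappaC_basis_def by simp
      qed
    qed
  qed
qed

lemma kb_anti: assumes "three_cycle x"
  shows "kappaC_basis 1 x p q = - kappaC_basis 1 x q p"
  using tc_two[OF assms, of p] tc_two[OF assms, of q] unfolding kappaC_basis_def by auto

lemma kb_rowsum: assumes "three_cycle x" shows "(\<Sum>q\<in>UNIV. kappaC_basis 1 x p q) = 0"
  by (cases "x p = p") (simp_all add: kb_row[OF assms] sum_subtractf)

lemma K_c: "kappaC c x u w = c * kappaC 1 x u w"
  unfolding kappaC_def kappaC_basis_def by (auto simp: sum_distrib_left intro!: sum.cong)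

lemma K_L: "kappaL a b x u w = kappaC 1 x u w *s (\<chi> l. if x l \<noteq> l then a else b)"
  unfolding kappaL_def kappaC_def kappaL_basis_def kappaC_basis_def Let_def
  by (auto simp: vec_eq_iff sum_distrib_right intro!: sum.cong)

lemma K_scale: "kappaC 1 x u (t *s w) = t * kappaC 1 x u w"
  unfolding kappaC_def by (auto simp: sum_distrib_left mult_ac intro!: sum.cong)

lemma K_add: "kappaC 1 x (u + v) w = kappaC 1 x u w + kappaC 1 x v w"
  unfolding kappaC_def by (auto simp: sum.distrib algebra_simps)

lemma e_nth: "e i $ l = (if l = i then 1 else 0)"
  by (simp add: e_def axis_def)

lemma sum_single_pt: fixes F :: "'n::finite \<Rightarrow> 'b::comm_monoid_add"
  assumes "\<And>l. l \<noteq> i \<Longrightarrow> F l = 0" shows "(\<Sum>l\<in>UNIV. F l) = F i"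
proof -
  have "(\<Sum>l\<in>UNIV. F l) = F i + (\<Sum>l\<in>UNIV-{i}. F l)" by (simp add: sum.remove)
  also have "(\<Sum>l\<in>UNIV-{i}. F l) = 0" using assms by (intro sum.neutral) auto
  finally show ?thesis by simp
qed

lemma K_e1: assumes "three_cycle x" shows "kappaC 1 x (e p) w = (\<Sum>q\<in>UNIV. w$q * kappaC_basis 1 x p q)"
  using assms unfolding kappaC_def by (subst sum_single_pt[of p]) (auto simp: e_nth)

lemma K_ee: assumes "three_cycle x" shows "kappaC 1 x (e p) (e q) = kappaC_basis 1 x p q"
  using assms by (simp add: K_e1) (subst sum_single_pt[of q], auto simp: e_nth)


lemma times_ind: "(a::complex) * (if P then 1 else 0) = (if P then a else 0)"
  by simp

lemma cyc_sum: assumes "three_cycle x"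
  shows "(\<Sum>p\<in>C. \<Sum>q\<in>UNIV. (if q \<in> C then a else b) * kappaC_basis 1 x p q) = 0"
proof -
  let ?k = "kappaC_basis 1 x"
  have D: "(\<Sum>p\<in>C. \<Sum>q\<in>C. ?k p q) = 0"
  proof -
    have "(\<Sum>p\<in>C. \<Sum>q\<in>C. ?k p q) = (\<Sum>q\<in>C. \<Sum>p\<in>C. ?k p q)" by (rule sum.swap)
    also have "\<dots> = (\<Sum>q\<in>C. \<Sum>p\<in>C. - ?k q p)"
      by (intro sum.cong refl) (rule kb_anti[OF assms])
    also have "\<dots> = - (\<Sum>q\<in>C. \<Sum>p\<in>C. ?k q p)"
      by (simp add: sum_negf)
    finally show ?thesis by simp
  qed
  have inner: "(\<Sum>q\<in>UNIV. (if q \<in> C then a else b) * ?k p q) = b * (\<Sum>q\<in>UNIV. ?k p q) + (a - b) * (\<Sum>q\<in>C. ?k p q)" for p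
  proof -
    have "(\<Sum>q\<in>UNIV. (if q \<in> C then a else b) * ?k p q) = (\<Sum>q\<in>UNIV. b * ?k p q + (if q \<in> C then (a - b) * ?k p q else 0))"
      by (intro sum.cong) (auto simp: algebra_simps)
    also have "\<dots> = b * (\<Sum>q\<in>UNIV. ?k p q) + (a - b) * (\<Sum>q\<in>C. ?k p q)"
      by (simp add: sum.distrib sum_distrib_left sum.If_cases)
    finally show ?thesis .
  qed
  show ?thesis
    by (simp add: inner kb_rowsum[OF assms] sum_distrib_left[symmetric] D)
qed

definition Av :: "complex \<Rightarrow> complex \<Rightarrow> ('n::finite \<Rightarrow> 'n) \<Rightarrow> 'n vec" where
  "Av a b x = (\<chi> l. if x l \<noteq> l then a else b)"

definition Sfun where
  "Sfun a b x y v1 v2 v3 =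
      kappaC 1 y v2 v3 * kappaC 1 x (v1 + act y v1) (Av a b y)
    + kappaC 1 y v3 v1 * kappaC 1 x (v2 + act y v2) (Av a b y)
    + kappaC 1 y v1 v2 * kappaC 1 x (v3 + act y v3) (Av a b y)"

lemma phiL_eq: "phi_xy (kappaL a b) (kappaL a b) x y v1 v2 v3 = Sfun a b x y v1 v2 v3 *s Av a b x"
  unfolding phi_xy_def Sfun_def K_L[folded Av_def] K_scale by (simp add: vector_sadd_rdistrib)

lemma phiC_eq: "phi_xy (kappaC c) (kappaL a b) x y v1 v2 v3 = c * Sfun a b x y v1 v2 v3"
  unfolding phi_xy_def Sfun_def K_L[folded Av_def] K_scale by (simp add: K_c[of c x] K_scale algebra_simps)

theorem lemma7p1:
  fixes a b c :: complex and x y :: "'n::finite \<Rightarrow> 'n" and i j k :: 'n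
  assumes "CARD('n) \<ge> 3"
    and "three_cycle x" and "three_cycle y"
  defines "phiL \<equiv> phi_xy (kappaL a b) (kappaL a b) x y"
    and "phiC \<equiv> phi_xy (kappaC c) (kappaL a b) x y"
  shows
   "(e i \<in> fixsp y \<and> e j \<in> fixsp y \<longrightarrow>
        phiL (e i) (e j) (e k) = 0 \<and> phiC (e i) (e j) (e k) = 0)
  \<and> (e i \<in> fixsp y \<inter> fixsp x \<longrightarrow>
        phiL (e i) (e j) (e k) = 0 \<and> phiC (e i) (e j) (e k) = 0)
  \<and> (e i \<in> fixsp y - fixsp x \<and> e j \<notin> fixsp y \<longrightarrow>
        phiL (e i) (e j) (act y (e j)) =
          (2 * (b - a) * (delta y (act x (e i)) - delta y (act (inv x) (e i))))
            *s kappaL a b x (e i) (act x (e i))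
      \<and> phiC (e i) (e j) (act y (e j)) =
          2 * (b - a) * (delta y (act x (e i)) - delta y (act (inv x) (e i)))
            * kappaC c x (e i) (act x (e i)))
  \<and> (e i \<notin> fixsp y \<longrightarrow>
        phiL (e i) (act y (e i)) (act y (act y (e i))) = 0
      \<and> phiC (e i) (act y (e i)) (act y (act y (e i))) = 0)"
  proof -
  have bx: "bij x" by (rule tc_bij[OF assms(2)])
  have by': "bij y" by (rule tc_bij[OF assms(3)])
  have bix: "bij (inv x)" by (rule bij_imp_bij_inv[OF bx])
  have ay: "\<And>p. act y (e p) = e (y p)" by (rule act_e[OF by'])
  have ax: "\<And>p. act x (e p) = e (x p)" by (rule act_e[OF bx])
  have aix: "\<And>p. act (inv x) (e p) = e (inv x p)" by (rule act_e[OF bix])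
  have fy: "\<And>p. e p \<in> fixsp y \<longleftrightarrow> y p = p" by (rule fix_e[OF by'])
  have fx: "\<And>p. e p \<in> fixsp x \<longleftrightarrow> x p = p" by (rule fix_e[OF bx])
  have dy: "\<And>p. delta y (e p) = (if y p = p then 1 else 0)" by (rule delta_e[OF by'])
  define A where "A = Av a b y"
  have Ac: "\<And>q. A $ q = (if y q \<noteq> q then a else b)" by (simp add: A_def Av_def)
  define R where "R p = (\<Sum>q\<in>UNIV. A $ q * kappaC_basis 1 x p q)" for p
  have KR: "\<And>p q. kappaC 1 x (e p + e q) A = R p + R q"
    by (simp add: K_add K_e1[OF assms(2)] R_def)
  have Ky: "\<And>p q. kappaC 1 y (e p) (e q) = kappaC_basis 1 y p q" by (rule K_ee[OF assms(3)])
  have ky1: "\<And>p q. y p = p \<Longrightarrow> kappaC_basis 1 y p q = 0" by (simp add: kb_row[OF assms(3)])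
  have ky2: "\<And>p q. y q = q \<Longrightarrow> kappaC_basis 1 y p q = 0"
    by (subst kb_anti[OF assms(3)]) (simp add: kb_row[OF assms(3)])
  have kyy: "kappaC_basis 1 y p (y p) = 1" if hp: "y p \<noteq> p" for p
  proof -
    have "y (y p) \<noteq> p" by (rule tc_two[OF assms(3) hp])
    then have "y p \<noteq> inv y p" using bij_inv_eq_iff[OF by'] by metis
    then show ?thesis using hp by (simp add: kb_row[OF assms(3)])
  qed
  have kxx: "kappaC_basis 1 x p (x p) = 1" if hp: "x p \<noteq> p" for p
  proof -
    have "x (x p) \<noteq> p" by (rule tc_two[OF assms(2) hp])
    then have "x p \<noteq> inv x p" using bij_inv_eq_iff[OF bx] by metis
    then show ?thesis using hp by (simp add: kb_row[OF assms(2)])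
  qed
  have Rfix: "\<And>p. x p = p \<Longrightarrow> R p = 0" by (simp add: R_def kb_row[OF assms(2)])
  have Rmov: "\<And>p. x p \<noteq> p \<Longrightarrow> R p = A $ (x p) - A $ (inv x p)"
    by (simp add: R_def kb_row[OF assms(2)] right_diff_distrib sum_subtractf times_ind)
  have SL: "\<And>v1 v2 v3. phiL v1 v2 v3 = Sfun a b x y v1 v2 v3 *s Av a b x"
    unfolding phiL_def by (rule phiL_eq)
  have SC: "\<And>v1 v2 v3. phiC v1 v2 v3 = c * Sfun a b x y v1 v2 v3"
    unfolding phiC_def by (rule phiC_eq)
  have Sf: "\<And>p q r. Sfun a b x y (e p) (e q) (e r) =
      kappaC_basis 1 y q r * (R p + R (y p)) + kappaC_basis 1 y r p * (R q + R (y q))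
      + kappaC_basis 1 y p q * (R r + R (y r))"
    by (simp add: Sfun_def ay Ky KR[unfolded A_def])
  have P1: "e i \<in> fixsp y \<and> e j \<in> fixsp y \<longrightarrow>
        phiL (e i) (e j) (e k) = 0 \<and> phiC (e i) (e j) (e k) = 0"
  proof
    assume "e i \<in> fixsp y \<and> e j \<in> fixsp y"
    then have "y i = i" "y j = j" using fy by auto
    then have "Sfun a b x y (e i) (e j) (e k) = 0" by (simp add: Sf ky1 ky2)
    then show "phiL (e i) (e j) (e k) = 0 \<and> phiC (e i) (e j) (e k) = 0" by (simp add: SL SC)
  qed
  have P2: "e i \<in> fixsp y \<inter> fixsp x \<longrightarrow>
        phiL (e i) (e j) (e k) = 0 \<and> phiC (e i) (e j) (e k) = 0"
  proof
    assume "e i \<in> fixsp y \<inter> fixsp x"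
    then have "y i = i" "x i = i" using fy fx by auto
    then have "Sfun a b x y (e i) (e j) (e k) = 0" by (simp add: Sf ky1 ky2 Rfix)
    then show "phiL (e i) (e j) (e k) = 0 \<and> phiC (e i) (e j) (e k) = 0" by (simp add: SL SC)
  qed
  have P3: "e i \<in> fixsp y - fixsp x \<and> e j \<notin> fixsp y \<longrightarrow>
        phiL (e i) (e j) (act y (e j)) =
          (2 * (b - a) * (delta y (act x (e i)) - delta y (act (inv x) (e i))))
            *s kappaL a b x (e i) (act x (e i))
      \<and> phiC (e i) (e j) (act y (e j)) =
          2 * (b - a) * (delta y (act x (e i)) - delta y (act (inv x) (e i)))
            * kappaC c x (e i) (act x (e i))"
  proof
    assume "e i \<in> fixsp y - fixsp x \<and> e j \<notin> fixsp y"
    then have h: "y i = i" "x i \<noteq> i" "y j \<noteq> j" using fy fx by auto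
    have "Sfun a b x y (e i) (e j) (e (y j)) = 2 * R i"
      using h by (simp add: Sf ky1 ky2 kyy)
    also have "\<dots> = 2 * (b - a) * (delta y (act x (e i)) - delta y (act (inv x) (e i)))"
      using h by (simp add: Rmov ax aix dy Ac algebra_simps)
    finally have S: "Sfun a b x y (e i) (e j) (e (y j)) = 2 * (b - a) * (delta y (act x (e i)) - delta y (act (inv x) (e i)))" .
    have K1: "kappaC 1 x (e i) (act x (e i)) = 1"
      using h by (simp add: ax K_ee[OF assms(2)] kxx)
    show "phiL (e i) (e j) (act y (e j)) =
          (2 * (b - a) * (delta y (act x (e i)) - delta y (act (inv x) (e i))))
            *s kappaL a b x (e i) (act x (e i))
      \<and> phiC (e i) (e j) (act y (e j)) =
          2 * (b - a) * (delta y (act x (e i)) - delta y (act (inv x) (e i)))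
            * kappaC c x (e i) (act x (e i))"
      unfolding SL SC ay[of j] S K_L[folded Av_def] K_c[of c x] using K1 ay[of i]
      by (simp add: vector_smult_assoc)
  qed
  have P4: "e i \<notin> fixsp y \<longrightarrow>
        phiL (e i) (act y (e i)) (act y (act y (e i))) = 0
      \<and> phiC (e i) (act y (e i)) (act y (act y (e i))) = 0"
  proof
    assume "e i \<notin> fixsp y"
    then have h: "y i \<noteq> i" using fy by auto
    have m: "{q. y q \<noteq> q} = {i, y i, y (y i)}" "y (y i) \<noteq> i" "y (y i) \<noteq> y i"
      using tc_moved[OF assms(3) h] by auto
    have c3: "y (y (y i)) = i" by (rule tc_cube[OF assms(3)])
    have h2: "y (y i) \<noteq> y i" "y (y (y i)) \<noteq> y (y i)" using m c3 by auto
    have k1: "kappaC_basis 1 y i (y i) = 1" by (rule kyy[OF h])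
    have k2: "kappaC_basis 1 y (y i) (y (y i)) = 1" by (rule kyy[OF h2(1)])
    have k3: "kappaC_basis 1 y (y (y i)) i = 1" using kyy[OF h2(2)] c3 by simp
    have "Sfun a b x y (e i) (e (y i)) (e (y (y i))) = (R i + R (y i)) + (R (y i) + R (y (y i))) + (R (y (y i)) + R i)"
      by (simp only: Sf k1 k2 k3 c3 mult_1)
    also have "\<dots> = 2 * (R i + R (y i) + R (y (y i)))" by (simp add: algebra_simps)
    finally have "Sfun a b x y (e i) (e (y i)) (e (y (y i))) = 2 * (R i + R (y i) + R (y (y i)))" .
    also have "R i + R (y i) + R (y (y i)) = (\<Sum>p\<in>{q. y q \<noteq> q}. R p)"
      unfolding m(1) using h m by simp
    also have "\<dots> = 0"
    proof -
      have "\<And>q. A $ q = (if q \<in> {q. y q \<noteq> q} then a else b)" by (simp add: Ac)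
      then show ?thesis unfolding R_def by (simp only:) (rule cyc_sum[OF assms(2)])
    qed
    finally have "Sfun a b x y (e i) (e (y i)) (e (y (y i))) = 0" by simp
    then show "phiL (e i) (act y (e i)) (act y (act y (e i))) = 0
      \<and> phiC (e i) (act y (e i)) (act y (act y (e i))) = 0" by (simp add: SL SC ay)
  qed
  show ?thesis using P1 P2 P3 P4 by blast
qed

end
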